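(* Suppose that there exist absolute constants $c_1'>1$, $c_2'>0$, $c_3'>0$ and $c_4'>0$ such that \begin{align*} \frac{1}{c_1'}\, d_n^2(\lambda_0,\lambda_1)\le \frac{1}{n}\mathrm{KL}\big(\mathsf{P}^{(n)}_{\lambda_0}, \mathsf{P}^{(n)}_{\lambda_1}\big)\le c_1'\, d_n^2(\lambda_0,\lambda_1) \end{align*} and \begin{align*} \mathsf{P}_{\lambda_0}^{(n)}\exp\Big\{t\Big(\log\frac{q_n(\lambda_0,Y^{(n)})}{q_n(\lambda_1,Y^{(n)})} - \mathrm{KL}\big(\mathsf{P}^{(n)}_{\lambda_0}, \mathsf{P}^{(n)}_{\lambda_1}\big)\Big)\Big\}\le c_2'\exp\big(c_3't^2n\, d_n^2(\lambda_0,\lambda_1)\big) \end{align*} for any $t\in[-c_4',c_4']$, any $\lambda_0,\lambda_1\in\Lambda_n$ and any sufficiently large $n\in\mathbb{N}$. Then there exist absolute constants $\rho_\circ\in(0,1)$, $\rho_{+}>1$, $a_2\ge a_1\in\mathbb{R}$ and $c_2\ge c_1>0$ such that \begin{align*} a_1+c_1 n d_n^2(\lambda_0,\lambda_1)\le \mathsf{D}_{\rho_\circ}\big(\mathsf{P}^{(n)}_{\lambda_0},\mathsf{P}^{(n)}_{\lambda_1}\big),\qquad \mathsf{D}_{\rho_{+}}\big(\mathsf{P}^{(n)}_{\lambda_0},\mathsf{P}^{(n)}_{\lambda_1}\big)\le a_2+c_2 n d_n^2(\lambda_0,\lambda_1) \end{align*} for any $\lambda_0,\lambda_1\in\Lambda_n$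 and any sufficiently large $n$.
   Context: For each $n\in\mathbb{N}$ a sample $Y^{(n)}$ takes values in a measurable space $\mathfrak{Y}_n$ with a $\sigma$-finite reference measure $\mu_n$. The natural parameter space $\Lambda_n$ is equipped with a metric $d_n$, and $q_n:\Lambda_n\times\mathfrak{Y}_n\to(0,\infty)$ is a likelihood with $\int q_n(\lambda,y)\,\mu_n(dy)=1$; $\mathsf{P}^{(n)}_\lambda(dy)=q_n(\lambda,y)\mu_n(dy)$ and $\mathsf{P}^{(n)}_\lambda g$ denotes expectation of $g$ under $\mathsf{P}^{(n)}_\lambda$. $\mathrm{KL}(\mathsf{P}_1,\mathsf{P}_2)=\int\log(d\mathsf{P}_1/d\mathsf{P}_2)\,d\mathsf{P}_1$, and for $\rho\in(0,1)\cup(1,\infty)$ the Rényi divergence is $\mathsf{D}_\rho(\mathsf{P}_1,\mathsf{P}_2)=\frac{1}{\rho-1}\log\int (d\mathsf{P}_1/d\mathsf{P}_2)^{\rho-1}d\mathsf{P}_1$ (both $+\infty$ if $\mathsf{P}_1\not\ll\mathsf{P}_2$). *)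

theory Defs
  imports "HOL-Analysis.Analysis"
begin

text \<open>Kullback-Leibler divergence between the laws with densities f and g
  (w.r.t. the reference measure M): the integral of f * ln (f/g), split into
  positive and negative parts (the negative part is always finite for probability
  densities), so the value lies in the extended reals and may be +infinity.\<close>
definition KL_dens :: "'a measure \<Rightarrow> ('a \<Rightarrow> real) \<Rightarrow> ('a \<Rightarrow> real) \<Rightarrow> ereal" where
  "KL_dens M f g =
     enn2ereal (\<integral>\<^sup>+ y. ennreal (f y * max 0 (ln (f y / g y))) \<partial>M)
   - enn2ereal (\<integral>\<^sup>+ y. ennreal (f y * max 0 (- ln (f y / g y))) \<partial>M)"

text \<open>Renyi divergence of order rho (rho \<noteq> 1) between the laws with densities f and g:
  1/(rho-1) * ln (integral of (f/g)^(rho-1) d P_f) = 1/(rho-1) * ln (integral of f^rho g^(1-rho) dM),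
  with value +infinity when rho > 1 and the integral diverges.\<close>
definition renyi_dens :: "real \<Rightarrow> 'a measure \<Rightarrow> ('a \<Rightarrow> real) \<Rightarrow> ('a \<Rightarrow> real) \<Rightarrow> ereal" where
  "renyi_dens \<rho> M f g =
     (let I = \<integral>\<^sup>+ y. ennreal (f y * (f y / g y) powr (\<rho> - 1)) \<partial>M
      in if I = \<infinity> then (if \<rho> > 1 then \<infinity> else - \<infinity>)
         else ereal (ln (enn2real I) / (\<rho> - 1)))"

end

theory Submission
  imports Defs
begin

lemma lemA:
  fixes M :: "'y measure" and f g :: "'y \<Rightarrow> real"
  assumes fm: "f \<in> borel_measurable M" and gm: "g \<in> borel_measurable M"
    and fp: "\<And>y. y \<in> space M \<Longrightarrow> f y > 0" and gp: "\<And>y. y \<in> space M \<Longrightarrow> g y > 0"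
    and fi: "(\<integral>\<^sup>+ y. ennreal (f y) \<partial>M) = 1"
    and hb: "(\<integral>\<^sup>+ y. ennreal (f y * exp (t * (ln (f y / g y) - K))) \<partial>M) \<le> ennreal B"
  shows "(\<integral>\<^sup>+ y. ennreal (f y * (f y / g y) powr t) \<partial>M) \<noteq> \<infinity>"
    and "0 < enn2real (\<integral>\<^sup>+ y. ennreal (f y * (f y / g y) powr t) \<partial>M)"
    and "ln (enn2real (\<integral>\<^sup>+ y. ennreal (f y * (f y / g y) powr t) \<partial>M)) \<le> t * K + ln B"
proof -
  let ?I = "\<integral>\<^sup>+ y. ennreal (f y * (f y / g y) powr t) \<partial>M"
  let ?J = "\<integral>\<^sup>+ y. ennreal (f y * exp (t * (ln (f y / g y) - K))) \<partial>M"
  have jm: "(\<lambda>y. ennreal (f y * exp (t * (ln (f y / g y) - K)))) \<in> borel_measurable M"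
    using fm gm by measurable
  have im: "(\<lambda>y. ennreal (f y * (f y / g y) powr t)) \<in> borel_measurable M"
    using fm gm by measurable
  have pt: "ennreal (f y * (f y / g y) powr t) = ennreal (exp (t * K)) * ennreal (f y * exp (t * (ln (f y / g y) - K)))"
    if "y \<in> space M" for y
  proof -
    have "f y / g y > 0" using fp[OF that] gp[OF that] by simp
    then have "f y * (f y / g y) powr t = exp (t * K) * (f y * exp (t * (ln (f y / g y) - K)))"
    proof -
      have "exp (t * K) * exp (t * (ln (f y / g y) - K)) = exp (t * ln (f y / g y))"
        by (simp add: exp_add[symmetric] algebra_simps)
      then show ?thesis using \<open>f y / g y > 0\<close> gp[OF that] by (simp add: powr_def mult.assoc[symmetric] mult.commute[of "exp (t * K)"])
    qed
    then show ?thesis using fp[OF that] by (simp add: ennreal_mult mult_ac)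
  qed
  have "?I = (\<integral>\<^sup>+ y. ennreal (exp (t * K)) * ennreal (f y * exp (t * (ln (f y / g y) - K))) \<partial>M)"
    by (rule nn_integral_cong) (rule pt)
  also have "\<dots> = ennreal (exp (t * K)) * ?J"
    by (rule nn_integral_cmult[OF jm])
  finally have IJ: "?I = ennreal (exp (t * K)) * ?J" .
  have Ile0: "?I \<le> ennreal (exp (t * K)) * ennreal B"
    unfolding IJ by (rule mult_left_mono[OF hb]) simp
  have fin0: "ennreal (exp (t * K)) * ennreal B < top"
    by (simp add: ennreal_mult_less_top)
  show fin: "?I \<noteq> \<infinity>" using Ile0 fin0
    using top.not_eq_extremum by fastforce
  have "?I \<noteq> 0"
  proof
    assume "?I = 0"
    then have "AE y in M. ennreal (f y * (f y / g y) powr t) = 0"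
      using nn_integral_0_iff_AE[OF im] by simp
    then have "AE y in M. ennreal (f y) = 0"
    proof (rule AE_mp)
      show "AE y in M. ennreal (f y * (f y / g y) powr t) = 0 \<longrightarrow> ennreal (f y) = 0"
      proof (intro AE_I2 impI)
        fix y assume y: "y \<in> space M" and "ennreal (f y * (f y / g y) powr t) = 0"
        have "f y * (f y / g y) powr t > 0" using fp[OF y] gp[OF y] by simp
        then show "ennreal (f y) = 0" using \<open>ennreal (f y * (f y / g y) powr t) = 0\<close> by (metis ennreal_eq_0_iff not_le)
      qed
    qed
    then have "(\<integral>\<^sup>+ y. ennreal (f y) \<partial>M) = (\<integral>\<^sup>+ y. 0 \<partial>M)"
      by (intro nn_integral_cong_AE) auto
    then show False using fi by simp
  qed
  then show pos: "0 < enn2real ?I" using fin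
    by (simp add: enn2real_positive_iff less_top order_neq_le_trans)
  have "B > 0"
  proof (rule ccontr)
    assume "\<not> B > 0"
    then have "ennreal B = 0" by (simp add: ennreal_eq_0_iff)
    then have "?I = 0" using Ile0 by simp
    then show False using pos by simp
  qed
  then have "?I \<le> ennreal (exp (t * K) * B)" using Ile0 by (simp add: ennreal_mult)
  then have "enn2real ?I \<le> enn2real (ennreal (exp (t * K) * B))"
    by (rule enn2real_mono) simp
  then have "enn2real ?I \<le> exp (t * K) * B" using \<open>B > 0\<close> by simp
  then have "ln (enn2real ?I) \<le> ln (exp (t * K) * B)" using pos by simp
  moreover note \<open>B > 0\<close>
  ultimately show "ln (enn2real ?I) \<le> t * K + ln B" by (simp add: ln_mult)
qed
theorem lemma3p1:
  fixes \<mu> :: "nat \<Rightarrow> 'y measure"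
    and \<Lambda> :: "nat \<Rightarrow> 'l set"
    and d :: "nat \<Rightarrow> 'l \<Rightarrow> 'l \<Rightarrow> real"
    and q :: "nat \<Rightarrow> 'l \<Rightarrow> 'y \<Rightarrow> real"
    and c1' c2' c3' c4' :: real
  assumes sfin: "\<And>n. sigma_finite_measure (\<mu> n)"
    and metric: "\<And>n. Metric_space (\<Lambda> n) (d n)"
    and q_meas: "\<And>n l. l \<in> \<Lambda> n \<Longrightarrow> q n l \<in> borel_measurable (\<mu> n)"
    and q_pos: "\<And>n l y. l \<in> \<Lambda> n \<Longrightarrow> y \<in> space (\<mu> n) \<Longrightarrow> q n l y > 0"
    and q_int: "\<And>n l. l \<in> \<Lambda> n \<Longrightarrow> (\<integral>\<^sup>+ y. ennreal (q n l y) \<partial>\<mu> n) = 1"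
    and cpos: "c1' > 1" "c2' > 0" "c3' > 0" "c4' > 0"
    and hyp: "\<exists>N. \<forall>n\<ge>N. \<forall>l0\<in>\<Lambda> n. \<forall>l1\<in>\<Lambda> n.
        ereal ((d n l0 l1)\<^sup>2 / c1') \<le> KL_dens (\<mu> n) (q n l0) (q n l1) / ereal (real n)
      \<and> KL_dens (\<mu> n) (q n l0) (q n l1) / ereal (real n) \<le> ereal (c1' * (d n l0 l1)\<^sup>2)
      \<and> (\<forall>t\<in>{-c4'..c4'}.
           (\<integral>\<^sup>+ y. ennreal (q n l0 y * exp (t * (ln (q n l0 y / q n l1 y)
                 - real_of_ereal (KL_dens (\<mu> n) (q n l0) (q n l1))))) \<partial>\<mu> n)
           \<le> ennreal (c2' * exp (c3' * t\<^sup>2 * real n * (d n l0 l1)\<^sup>2)))"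
  shows "\<exists>\<rho>o \<rho>p a1 a2 c1 c2 :: real.
      0 < \<rho>o \<and> \<rho>o < 1 \<and> \<rho>p > 1 \<and> a1 \<le> a2 \<and> 0 < c1 \<and> c1 \<le> c2 \<and>
      (\<exists>N. \<forall>n\<ge>N. \<forall>l0\<in>\<Lambda> n. \<forall>l1\<in>\<Lambda> n.
         ereal (a1 + c1 * real n * (d n l0 l1)\<^sup>2) \<le> renyi_dens \<rho>o (\<mu> n) (q n l0) (q n l1)
       \<and> renyi_dens \<rho>p (\<mu> n) (q n l0) (q n l1) \<le> ereal (a2 + c2 * real n * (d n l0 l1)\<^sup>2))"
proof -
  obtain N where hN: "\<forall>n\<ge>N. \<forall>l0\<in>\<Lambda> n. \<forall>l1\<in>\<Lambda> n.
        ereal ((d n l0 l1)\<^sup>2 / c1') \<le> KL_dens (\<mu> n) (q n l0) (q n l1) / ereal (real n)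
      \<and> KL_dens (\<mu> n) (q n l0) (q n l1) / ereal (real n) \<le> ereal (c1' * (d n l0 l1)\<^sup>2)
      \<and> (\<forall>t\<in>{-c4'..c4'}.
           (\<integral>\<^sup>+ y. ennreal (q n l0 y * exp (t * (ln (q n l0 y / q n l1 y)
                 - real_of_ereal (KL_dens (\<mu> n) (q n l0) (q n l1))))) \<partial>\<mu> n)
           \<le> ennreal (c2' * exp (c3' * t\<^sup>2 * real n * (d n l0 l1)\<^sup>2)))"
    using hyp by blast
  define s where "s = min c4' (min (1/2) (1/(2*c1'*c3')))"
  define A where "A = \<bar>ln c2'\<bar>"
  have s0: "s > 0" using cpos by (simp add: s_def)
  have s1: "s < 1" "s \<le> c4'" by (auto simp: s_def)
  have "s \<le> 1/(2*c1'*c3')" by (simp add: s_def)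
  then have "c3' * s \<le> c3' * (1/(2*c1'*c3'))" using cpos by (intro mult_left_mono) auto
  also have "\<dots> = 1/(2*c1')" using cpos by simp
  finally have cs: "c3' * s \<le> 1/(2*c1')" .
  have c1pos: "1/c1' - c3' * s > 0"
  proof -
    have "1/(2*c1') < 1/c1'" using cpos by (simp add: field_simps)
    then show ?thesis using cs by linarith
  qed
  have c1le: "1/c1' - c3' * s \<le> c1' + c3' * c4'"
  proof -
    have "1/c1' < 1" using cpos by simp
    moreover have "c3' * s > 0" "c3' * c4' > 0" using cpos s0 by auto
    ultimately show ?thesis using cpos by linarith
  qed
  have A0: "A \<ge> 0" by (simp add: A_def)
  show ?thesis
  proof (intro exI conjI)
    show "0 < 1 - s" "1 - s < 1" "1 + c4' > 1" using s0 s1 cpos by auto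
    show "- A / s \<le> A / c4' + A / s" using A0 s0 cpos by (simp add: field_simps)
    show "0 < 1/c1' - c3' * s" by (rule c1pos)
    show "1/c1' - c3' * s \<le> c1' + c3' * c4'" by (rule c1le)
    show "\<forall>n\<ge>max N 1. \<forall>l0\<in>\<Lambda> n. \<forall>l1\<in>\<Lambda> n.
         ereal (- A / s + (1/c1' - c3' * s) * real n * (d n l0 l1)\<^sup>2) \<le> renyi_dens (1 - s) (\<mu> n) (q n l0) (q n l1)
       \<and> renyi_dens (1 + c4') (\<mu> n) (q n l0) (q n l1) \<le> ereal (A / c4' + A / s + (c1' + c3' * c4') * real n * (d n l0 l1)\<^sup>2)"
    proof (intro allI impI ballI)
      fix n l0 l1 assume n: "max N 1 \<le> n" and l0: "l0 \<in> \<Lambda> n" and l1: "l1 \<in> \<Lambda> n"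
      have nN: "n \<ge> N" and npos: "real n > 0" using n by auto
      note H = hN[rule_format, OF nN l0 l1]
      define KL where "KL = KL_dens (\<mu> n) (q n l0) (q n l1)"
      define x where "x = real n * (d n l0 l1)\<^sup>2"
      have x0: "x \<ge> 0" using npos by (simp add: x_def)
      have H1: "ereal ((d n l0 l1)\<^sup>2 / c1') \<le> KL / ereal (real n)"
        and H2: "KL / ereal (real n) \<le> ereal (c1' * (d n l0 l1)\<^sup>2)"
        using H by (auto simp: KL_def)
      obtain K where KL: "KL = ereal K"
      proof (cases KL)
        case (real r) then show ?thesis using that by blast
      next
        case PInf
        then have "KL / ereal (real n) = \<infinity>" using npos by (simp add: ereal_divide)
        then show ?thesis using H2 by simp
      next
        case MInf
        then have "KL / ereal (real n) = - \<infinity>" using npos by (simp add: ereal_divide)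
        then show ?thesis using H1 by simp
      qed
      have "(d n l0 l1)\<^sup>2 / c1' \<le> K / real n" "K / real n \<le> c1' * (d n l0 l1)\<^sup>2"
        using H1 H2 npos by (auto simp: KL ereal_divide)
      then have Klo: "x / c1' \<le> K" and Khi: "K \<le> c1' * x"
        using npos by (auto simp: x_def field_simps)
      have H3: "\<And>t. t \<in> {-c4'..c4'} \<Longrightarrow> (\<integral>\<^sup>+ y. ennreal (q n l0 y * exp (t * (ln (q n l0 y / q n l1 y) - K))) \<partial>\<mu> n)
           \<le> ennreal (c2' * exp (c3' * t\<^sup>2 * x))"
        using H KL by (auto simp: KL_def x_def mult.assoc)
      have qp0: "\<And>y. y \<in> space (\<mu> n) \<Longrightarrow> q n l0 y > 0" using q_pos l0 by blast
      have qp1: "\<And>y. y \<in> space (\<mu> n) \<Longrightarrow> q n l1 y > 0" using q_pos l1 by blast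
      have LA: "(\<integral>\<^sup>+ y. ennreal (q n l0 y * (q n l0 y / q n l1 y) powr t) \<partial>\<mu> n) \<noteq> \<infinity> \<and>
        ln (enn2real (\<integral>\<^sup>+ y. ennreal (q n l0 y * (q n l0 y / q n l1 y) powr t) \<partial>\<mu> n)) \<le> t * K + ln B"
        if "(\<integral>\<^sup>+ y. ennreal (q n l0 y * exp (t * (ln (q n l0 y / q n l1 y) - K))) \<partial>\<mu> n) \<le> ennreal B" for t B
        using lemA(1,3)[of "q n l0" "\<mu> n" "q n l1", OF q_meas[OF l0] q_meas[OF l1] _ _ q_int[OF l0] that] qp0 qp1
        by blast
      have lnB: "ln (c2' * exp (c3' * t\<^sup>2 * x)) = ln c2' + c3' * t\<^sup>2 * x" for t
        using cpos by (simp add: ln_mult)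
      have Up: "c4' \<in> {-c4'..c4'}" using cpos by auto
      have U: "(\<integral>\<^sup>+ y. ennreal (q n l0 y * (q n l0 y / q n l1 y) powr c4') \<partial>\<mu> n) \<noteq> \<infinity>" "ln (enn2real (\<integral>\<^sup>+ y. ennreal (q n l0 y * (q n l0 y / q n l1 y) powr c4') \<partial>\<mu> n)) \<le> c4' * K + ln (c2' * exp (c3' * c4'\<^sup>2 * x))" using LA[OF H3[OF Up]] by auto
      define LU where "LU = ln (enn2real (\<integral>\<^sup>+ y. ennreal (q n l0 y * (q n l0 y / q n l1 y) powr c4') \<partial>\<mu> n))"
      have LUb: "LU \<le> c4' * K + ln c2' + c3' * c4'\<^sup>2 * x" using U(2) lnB[of c4'] by (simp add: LU_def)
      have "LU / c4' \<le> (c4' * K + ln c2' + c3' * c4'\<^sup>2 * x) / c4'"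
        using LUb cpos by (simp add: divide_right_mono)
      also have "\<dots> = K + ln c2' / c4' + c3' * c4' * x" using cpos by (simp add: field_simps power2_eq_square)
      also have "\<dots> \<le> A / c4' + A / s + (c1' + c3' * c4') * x"
      proof -
        have "ln c2' / c4' \<le> A / c4'" using cpos by (simp add: A_def divide_right_mono)
        moreover have "A / s \<ge> 0" using A0 s0 by simp
        ultimately show ?thesis using Khi by (simp add: algebra_simps)
      qed
      finally have upper: "LU / c4' \<le> A / c4' + A / s + (c1' + c3' * c4') * x" .
      have Lp: "-s \<in> {-c4'..c4'}" using s0 s1 by auto
      have L: "(\<integral>\<^sup>+ y. ennreal (q n l0 y * (q n l0 y / q n l1 y) powr (-s)) \<partial>\<mu> n) \<noteq> \<infinity>" "ln (enn2real (\<integral>\<^sup>+ y. ennreal (q n l0 y * (q n l0 y / q n l1 y) powr (-s)) \<partial>\<mu> n)) \<le> -s * K + ln (c2' * exp (c3' * (-s)\<^sup>2 * x))" using LA[OF H3[OF Lp]] by auto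
      define LL where "LL = ln (enn2real (\<integral>\<^sup>+ y. ennreal (q n l0 y * (q n l0 y / q n l1 y) powr (-s)) \<partial>\<mu> n))"
      have LLb: "LL \<le> -s * K + ln c2' + c3' * s\<^sup>2 * x" using L(2) lnB[of "-s"] by (simp add: LL_def)
      have "- A / s + (1/c1' - c3' * s) * x \<le> K - ln c2' / s - c3' * s * x"
      proof -
        have "- A / s \<le> - ln c2' / s" using s0 by (simp add: A_def divide_right_mono)
        moreover have "x / c1' = 1/c1' * x" by simp
        ultimately show ?thesis using Klo by (simp add: algebra_simps)
      qed
      also have "K - ln c2' / s - c3' * s * x = (-s * K + ln c2' + c3' * s\<^sup>2 * x) / (-s)"
        using s0 by (simp add: field_simps power2_eq_square)
      also have "\<dots> \<le> LL / (-s)"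
        using LLb s0 by (intro divide_right_mono_neg) auto
      finally have lower: "- A / s + (1/c1' - c3' * s) * x \<le> LL / (-s)" .
      show "ereal (- A / s + (1/c1' - c3' * s) * real n * (d n l0 l1)\<^sup>2) \<le> renyi_dens (1 - s) (\<mu> n) (q n l0) (q n l1)
       \<and> renyi_dens (1 + c4') (\<mu> n) (q n l0) (q n l1) \<le> ereal (A / c4' + A / s + (c1' + c3' * c4') * real n * (d n l0 l1)\<^sup>2)"
      proof
        show "ereal (- A / s + (1/c1' - c3' * s) * real n * (d n l0 l1)\<^sup>2) \<le> renyi_dens (1 - s) (\<mu> n) (q n l0) (q n l1)"
          using lower L(1) by (simp add: renyi_dens_def Let_def LL_def x_def mult.assoc)
        show "renyi_dens (1 + c4') (\<mu> n) (q n l0) (q n l1) \<le> ereal (A / c4' + A / s + (c1' + c3' * c4') * real n * (d n l0 l1)\<^sup>2)"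
          using upper U(1) by (simp add: renyi_dens_def Let_def LU_def x_def mult.assoc)
      qed
    qed
  qed
qed

end
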